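(* Let $c$ and $z$ be complex numbers and let $n$ be a positive integer. Then \[ \sum_{\pi \in \mathcal{D}(n)} (-1)^{\#(\pi)-1} \sum_{j=1}^{s(\pi)} \bigl(\ell(\pi) - s(\pi) + j\bigr)^z\, c^{\ell(\pi) - s(\pi) + j} = \sigma_{z,c}(n), \] where $\sigma_{z,c}(n) = \sum_{d \mid n} d^z c^d$.
   Context: For a positive integer $n$, $\mathcal{D}(n)$ denotes the set of all partitions of $n$ into distinct parts. For a partition $\pi$: $s(\pi)$ is its smallest part, $\ell(\pi)$ its largest part, and $\#(\pi)$ its number of parts. For a positive integer $m$ and complex $z$, $m^z = e^{z\log m}$ with the real logarithm. The sum $\sum_{d\mid n}$ runs over the positive divisors $d$ of $n$. *)

theory Defs
  imports "HOL-Analysis.Analysis"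
begin

text \<open>A partition of n into distinct parts is represented by its (finite) set of parts,
  all positive, summing to n.\<close>
definition distinct_partitions :: "nat \<Rightarrow> nat set set" where
  "distinct_partitions n = {P. finite P \<and> (\<forall>p\<in>P. p > 0) \<and> \<Sum>P = n}"

definition sigma_zc :: "complex \<Rightarrow> complex \<Rightarrow> nat \<Rightarrow> complex" where
  "sigma_zc z c n = (\<Sum>d\<in>{d::nat. d dvd n}. (of_nat d :: complex) powr z * c ^ d)"

end

theory Submission imports Defs begin

lemma D_mem: "P \<in> distinct_partitions n \<longleftrightarrow> finite P \<and> (\<forall>p\<in>P. p > 0) \<and> \<Sum>P = n"
  by (simp add: distinct_partitions_def)

lemma D_le: assumes "P \<in> distinct_partitions n" "p \<in> P" shows "p \<le> n"
proof -
  have "finite P" "\<Sum>P = n" using assms by (auto simp: D_mem)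
  thus ?thesis using assms(2) by (metis member_le_sum zero_le)
qed

lemma finite_D: "finite (distinct_partitions n)"
proof -
  have "distinct_partitions n \<subseteq> Pow {1..n}"
    using D_le by (auto simp: D_mem Suc_le_eq)
  thus ?thesis by (rule finite_subset) simp
qed

lemma D_nonempty: "P \<in> distinct_partitions n \<Longrightarrow> n > 0 \<Longrightarrow> P \<noteq> {}"
  by (auto simp: D_mem)

definition top :: "nat \<Rightarrow> nat \<Rightarrow> int" where
  "top m n = (\<Sum>P\<in>{P\<in>distinct_partitions n. P \<noteq> {} \<and> m \<le> Max P \<and> Max P - Min P < m}. (-1)^(card P - 1))"
definition bot :: "nat \<Rightarrow> nat \<Rightarrow> int" where
  "bot m n = (\<Sum>P\<in>{P\<in>distinct_partitions n. P \<noteq> {} \<and> Max P - Min P < m}. (-1)^(card P - 1))"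
definition sq :: "nat \<Rightarrow> nat \<Rightarrow> int" where
  "sq m n = (\<Sum>P\<in>{P\<in>distinct_partitions n. P \<subseteq> {1..<m}}. (-1)^(card P))"
definition sq1 :: "nat \<Rightarrow> nat \<Rightarrow> int" where
  "sq1 m n = (\<Sum>P\<in>{P\<in>distinct_partitions n. P \<noteq> {} \<and> P \<subseteq> {1..<m}}. (-1)^(card P - 1))"

lemma top_small: assumes "n < m" shows "top m n = 0"
proof -
  have e: "{P\<in>distinct_partitions n. P \<noteq> {} \<and> m \<le> Max P \<and> Max P - Min P < m} = {}"
  proof (rule ccontr)
    assume "\<not> ?thesis"
    then obtain P where P: "P \<in> distinct_partitions n" "P \<noteq> {}" "m \<le> Max P" by auto
    have "finite P" using P by (simp add: D_mem)
    hence "Max P \<in> P" using P Max_in by blast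
    hence "Max P \<le> n" using D_le P by blast
    thus False using P assms by simp
  qed
  show ?thesis unfolding top_def e by simp
qed

lemma bot_split: assumes "m \<ge> 1" shows "bot m k = top m k + sq1 m k"
proof -
  let ?A = "{P\<in>distinct_partitions k. P \<noteq> {} \<and> m \<le> Max P \<and> Max P - Min P < m}"
  let ?B = "{P\<in>distinct_partitions k. P \<noteq> {} \<and> P \<subseteq> {1..<m}}"
  have eq: "{P\<in>distinct_partitions k. P \<noteq> {} \<and> Max P - Min P < m} = ?A \<union> ?B"
  proof (intro set_eqI iffI)
    fix P assume "P \<in> {P\<in>distinct_partitions k. P \<noteq> {} \<and> Max P - Min P < m}"
    hence P: "P \<in> distinct_partitions k" "P \<noteq> {}" "Max P - Min P < m" by auto
    have f: "finite P" and pos: "\<forall>p\<in>P. p > 0" using P by (auto simp: D_mem)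
    show "P \<in> ?A \<union> ?B"
    proof (cases "m \<le> Max P")
      case True thus ?thesis using P by auto
    next
      case False
      hence "P \<subseteq> {1..<m}" using f P pos by (auto simp: Suc_le_eq)
        (meson Max_ge f le_less_trans not_le)
      thus ?thesis using P by auto
    qed
  next
    fix P assume "P \<in> ?A \<union> ?B"
    thus "P \<in> {P\<in>distinct_partitions k. P \<noteq> {} \<and> Max P - Min P < m}"
    proof
      assume "P \<in> ?B"
      hence P: "P \<in> distinct_partitions k" "P \<noteq> {}" "P \<subseteq> {1..<m}" by auto
      have f: "finite P" using P by (auto simp: D_mem)
      have "Max P < m" using Max_in[OF f P(2)] P(3) by auto
      thus ?thesis using P by auto
    qed auto
  qed
  have disj: "?A \<inter> ?B = {}"
  proof (rule ccontr)
    assume "?A \<inter> ?B \<noteq> {}"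
    then obtain P where P: "P \<in> distinct_partitions k" "P \<noteq> {}" "m \<le> Max P" "P \<subseteq> {1..<m}" by auto
    have f: "finite P" using P by (auto simp: D_mem)
    show False using Max_in[OF f P(2)] P by auto
  qed
  have fA: "finite ?A" and fB: "finite ?B" using finite_D by auto
  show ?thesis unfolding bot_def top_def sq1_def eq
    by (rule sum.union_disjoint[OF fA fB disj])
qed

lemma sq1_sq: "sq1 m k = (if k = 0 then 1 else 0) - sq m k"
proof -
  let ?B = "{P\<in>distinct_partitions k. P \<noteq> {} \<and> P \<subseteq> {1..<m}}"
  let ?C = "{P\<in>distinct_partitions k. P \<subseteq> {1..<m}}"
  have fB: "finite ?B" using finite_D by auto
  have w: "(\<Sum>P\<in>?B. (-1::int)^(card P - 1)) = - (\<Sum>P\<in>?B. (-1)^(card P))"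
  proof -
    have "(\<Sum>P\<in>?B. (-1::int)^(card P - 1)) = (\<Sum>P\<in>?B. - ((-1)^(card P)))"
    proof (rule sum.cong[OF refl])
      fix P assume "P \<in> ?B"
      hence "card P > 0" by (auto simp: D_mem card_gt_0_iff)
      then obtain c where "card P = Suc c" using gr0_implies_Suc by blast
      thus "(-1::int)^(card P - 1) = - ((-1)^(card P))" by simp
    qed
    thus ?thesis by (simp add: sum_negf)
  qed
  show ?thesis
  proof (cases "k = 0")
    case True
    have "?C = insert {} ?B" using True by (auto simp: D_mem)
    moreover have "{} \<notin> ?B" by simp
    ultimately have "sq m k = 1 + (\<Sum>P\<in>?B. (-1)^(card P))"
      unfolding sq_def using fB by simp
    thus ?thesis using True w unfolding sq1_def by simp
  next
    case False
    have "?C = ?B" using False by (auto simp: D_mem)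
    thus ?thesis using False w unfolding sq1_def sq_def by simp
  qed
qed


lemma top_rec: assumes m1: "m \<ge> 1" and nm: "n \<ge> m" shows "top m n = bot m (n-m) + sq m (n-m)"
proof -
  let ?S = "{P\<in>distinct_partitions n. P \<noteq> {} \<and> m \<le> Max P \<and> Max P - Min P < m}"
  let ?SA = "{P\<in>?S. Max P \<noteq> m}"
  let ?SB = "{P\<in>?S. Max P = m}"
  let ?TA = "{P\<in>distinct_partitions (n-m). P \<noteq> {} \<and> Max P - Min P < m}"
  let ?TB = "{P\<in>distinct_partitions (n-m). P \<subseteq> {1..<m}}"
  have fS: "finite ?S" using finite_D by auto
  have split: "(\<Sum>P\<in>?S. (-1::int)^(card P - 1)) = (\<Sum>P\<in>?SA. (-1)^(card P - 1)) + (\<Sum>P\<in>?SB. (-1)^(card P - 1))"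
  proof -
    have "?S = ?SA \<union> ?SB" by auto
    moreover have "?SA \<inter> ?SB = {}" by auto
    ultimately show ?thesis using fS by (metis (no_types, lifting) finite_Un sum.union_disjoint)
  qed
  have A: "(\<Sum>P\<in>?SA. (-1::int)^(card P - 1)) = bot m (n-m)"
    unfolding bot_def
  proof (rule sum.reindex_bij_witness[where i = "\<lambda>P. insert (Min P + m) (P - {Min P})"
          and j = "\<lambda>P. insert (Max P - m) (P - {Max P})"])
    fix P assume "P \<in> ?SA"
    hence P: "P \<in> distinct_partitions n" "P \<noteq> {}" "m \<le> Max P" "Max P - Min P < m" "Max P \<noteq> m"
      by auto
    have f: "finite P" and pos: "\<forall>p\<in>P. p > 0" and sP: "\<Sum>P = n" using P by (auto simp: D_mem)
    define l where "l = Max P"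
    have lP: "l \<in> P" using Max_in[OF f P(2)] l_def by simp
    have le: "\<forall>x\<in>P. x \<le> l" using f l_def by simp
    have mi: "Min P \<le> Max P" using f P(2) by simp
    have "Min P > l - m" using P(3) P(4) mi l_def by linarith
    hence ge: "\<forall>x\<in>P. x > l - m" using f by (meson Min_le less_le_trans)
    have lm: "l > m" using P l_def by simp
    have nin: "l - m \<notin> P - {l}" using ge by auto
    let ?Q = "insert (l - m) (P - {l})"
    have fQ: "finite ?Q" using f by simp
    have minQ: "Min ?Q = l - m"
      using fQ ge by (intro Min_eqI) auto
    have "Min ?Q + m = l" using minQ lm by simp
    moreover have "?Q - {l - m} = P - {l}" using nin by auto
    ultimately show "insert (Min ?Q + m) (?Q - {Min ?Q}) = P"
      using minQ lP l_def by (simp add: insert_absorb)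
    have "\<Sum>?Q = (l - m) + \<Sum>(P - {l})" using f nin by simp
    also have "\<Sum>(P - {l}) = n - l" using sum_diff1_nat[of "\<lambda>x. x" P l] lP sP by simp
    finally have sQ: "\<Sum>?Q = n - m" using lm le lP D_le[OF P(1) lP] by simp
    have posQ: "\<forall>p\<in>?Q. p > 0" using pos lm by auto
    have maxQ: "Max ?Q - Min ?Q < m"
    proof -
      have "\<forall>x\<in>?Q. x < l" using le lm m1 by auto
      hence "Max ?Q < l" using fQ by simp
      moreover have "\<And>a::nat. a < l \<Longrightarrow> m < l \<Longrightarrow> m \<ge> 1 \<Longrightarrow> a - (l - m) < m" by arith
      ultimately show ?thesis using minQ lm m1 by simp
    qed
    show "insert (Max P - m) (P - {Max P}) \<in> ?TA"
      using fQ posQ sQ maxQ l_def by (auto simp: D_mem)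
    have "card ?Q = card P" using f nin lP
      by (simp add: card_Diff_singleton) (metis Suc_pred card_gt_0_iff empty_iff)
    thus "(-1::int) ^ (card (insert (Max P - m) (P - {Max P})) - 1) = (-1) ^ (card P - 1)"
      using l_def by simp
  next
    fix P assume "P \<in> ?TA"
    hence P: "P \<in> distinct_partitions (n-m)" "P \<noteq> {}" "Max P - Min P < m" by auto
    have f: "finite P" and pos: "\<forall>p\<in>P. p > 0" and sP: "\<Sum>P = n - m" using P by (auto simp: D_mem)
    define s where "s = Min P"
    have sP': "s \<in> P" using Min_in[OF f P(2)] s_def by simp
    have ge: "\<forall>x\<in>P. s \<le> x" using f s_def by simp
    have mi: "Min P \<le> Max P" using f P(2) by simp
    have "Max P < s + m" using P(3) mi s_def by linarith
    hence lt: "\<forall>x\<in>P. x < s + m" using f by (meson Max_ge le_less_trans)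
    have s1: "s \<ge> 1" using pos sP' by auto
    have nin: "s + m \<notin> P - {s}" using lt by auto
    let ?Q = "insert (s + m) (P - {s})"
    have fQ: "finite ?Q" using f by simp
    have maxQ: "Max ?Q = s + m" using fQ lt by (intro Max_eqI) auto
    have "Max ?Q - m = s" using maxQ by simp
    moreover have "?Q - {s + m} = P - {s}" using nin by auto
    ultimately show "insert (Max ?Q - m) (?Q - {Max ?Q}) = P"
      using maxQ sP' s_def by (simp add: insert_absorb)
    have "\<Sum>?Q = (s + m) + \<Sum>(P - {s})" using f nin by simp
    also have "\<Sum>(P - {s}) = (n - m) - s" using sum_diff1_nat[of "\<lambda>x. x" P s] sP' sP by simp
    finally have sQ: "\<Sum>?Q = n" using D_le[OF P(1) sP'] nm by simp
    have posQ: "\<forall>p\<in>?Q. p > 0" using pos s1 by auto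
    have gtQ: "\<forall>x\<in>?Q. x > s" using ge m1 by auto
    hence "Min ?Q > s" using fQ by simp
    hence mm: "Max ?Q - Min ?Q < m" using maxQ m1 by linarith
    show "insert (Min P + m) (P - {Min P}) \<in> ?SA"
      using fQ posQ sQ mm maxQ s1 s_def by (auto simp: D_mem)
  qed
  have B: "(\<Sum>P\<in>?SB. (-1::int)^(card P - 1)) = sq m (n-m)"
    unfolding sq_def
  proof (rule sum.reindex_bij_witness[where i = "\<lambda>P. insert m P" and j = "\<lambda>P. P - {m}"])
    fix P assume "P \<in> ?SB"
    hence P: "P \<in> distinct_partitions n" "P \<noteq> {}" "Max P = m"
      by auto
    have f: "finite P" and pos: "\<forall>p\<in>P. p > 0" and sP: "\<Sum>P = n" using P by (auto simp: D_mem)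
    have mP: "m \<in> P" using Max_in[OF f P(2)] P by simp
    have le: "\<forall>x\<in>P. x \<le> m" using f P by (metis Max_ge)
    show "insert m (P - {m}) = P" using mP by auto
    have "\<Sum>(P - {m}) = n - m" using sum_diff1_nat[of "\<lambda>x. x" P m] mP sP by simp
    moreover have "P - {m} \<subseteq> {1..<m}" using le pos by (force simp: Suc_le_eq)
    ultimately show "P - {m} \<in> ?TB" using f pos by (auto simp: D_mem)
    show "(-1::int) ^ card (P - {m}) = (-1) ^ (card P - 1)" using f mP by simp
  next
    fix Q assume "Q \<in> ?TB"
    hence Q: "Q \<in> distinct_partitions (n-m)" "Q \<subseteq> {1..<m}" by auto
    have f: "finite Q" and pos: "\<forall>p\<in>Q. p > 0" and sQ: "\<Sum>Q = n - m" using Q by (auto simp: D_mem)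
    have nin: "m \<notin> Q" using Q by auto
    show "insert m Q - {m} = Q" using nin by simp
    have maxQ: "Max (insert m Q) = m" using f Q(2) by (intro Max_eqI) auto
    have "Min (insert m Q) \<ge> 1" using f pos m1 by (simp add: Suc_le_eq)
    hence mm: "Max (insert m Q) - Min (insert m Q) < m" using maxQ m1 by linarith
    have "\<Sum>(insert m Q) = n" using f nin sQ nm by simp
    thus "insert m Q \<in> ?SB" using f pos mm maxQ m1 by (auto simp: D_mem)
  qed
  show ?thesis unfolding top_def using split A B by simp
qed


lemma top_val: assumes m1: "m \<ge> 1" shows "top m n = (if m dvd n \<and> n > 0 then 1 else 0)"
proof (induction n rule: less_induct)
  case (less n)
  show ?case
  proof (cases "n < m")
    case True
    hence "\<not> (m dvd n \<and> n > 0)" using dvd_imp_le by (metis not_le)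
    thus ?thesis using top_small[OF True] by simp
  next
    case False
    hence nm: "n \<ge> m" by simp
    have r: "top m n = top m (n-m) + (if n - m = 0 then 1 else 0)"
      using top_rec[OF m1 nm] bot_split[OF m1] sq1_sq by simp
    show ?thesis
    proof (cases "n = m")
      case True
      thus ?thesis using r top_small[of 0 m] m1 by simp
    next
      case False
      hence "n - m < n" "n - m > 0" using nm m1 by auto
      hence "top m (n-m) = (if m dvd (n-m) then 1 else 0)" using less by simp
      moreover have "m dvd (n-m) \<longleftrightarrow> m dvd n" using nm by (simp add: dvd_minus_self)
      ultimately show ?thesis using r nm False m1 by simp
    qed
  qed
qed

theorem theorem2p1:
  fixes c z :: complex and n :: nat
  assumes "n > 0"
  shows "(\<Sum>P\<in>distinct_partitions n. (-1) ^ (card P - 1) *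
            (\<Sum>j=1..Min P. (of_nat (Max P - Min P + j) :: complex) powr z * c ^ (Max P - Min P + j)))
         = sigma_zc z c n"
proof -
  define f where "f k = (of_nat k :: complex) powr z * c ^ k" for k :: nat
  define cnd where "cnd P k \<longleftrightarrow> Max P - Min P < k \<and> k \<le> Max P" for P :: "nat set" and k
  have step1: "(\<Sum>j=1..Min P. f (Max P - Min P + j)) = (\<Sum>k\<in>{1..n}. if cnd P k then f k else 0)"
    if P: "P \<in> distinct_partitions n" for P
  proof -
    have fP: "finite P" and ne: "P \<noteq> {}" using P assms by (auto simp: D_mem)
    have mi: "Min P \<le> Max P" using fP ne by simp
    have mx: "Max P \<le> n" using D_le[OF P Max_in[OF fP ne]] .
    define a where "a = Max P - Min P"
    have "(\<Sum>j=1..Min P. f (Max P - Min P + j)) = (\<Sum>j=1..Min P. f (j + a))"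
      by (simp add: a_def add.commute)
    also have "\<dots> = (\<Sum>k=1+a..Min P + a. f k)" by (rule sum.shift_bounds_cl_nat_ivl[symmetric])
    also have "{1+a..Min P + a} = {k\<in>{1..n}. cnd P k}"
      using mi mx by (auto simp: a_def cnd_def)
    also have "(\<Sum>k\<in>{k\<in>{1..n}. cnd P k}. f k) = (\<Sum>k\<in>{1..n}. if cnd P k then f k else 0)"
      by (rule sum.inter_filter) simp
    finally show ?thesis .
  qed
  have step2: "(\<Sum>P\<in>distinct_partitions n. (-1::complex) ^ (card P - 1) * (if cnd P k then f k else 0))
      = f k * of_int (top k n)" for k
  proof -
    have "(\<Sum>P\<in>distinct_partitions n. (-1::complex) ^ (card P - 1) * (if cnd P k then f k else 0))
        = (\<Sum>P\<in>distinct_partitions n. if cnd P k then (-1::complex) ^ (card P - 1) * f k else 0)"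
      by (intro sum.cong) auto
    also have "\<dots> = (\<Sum>P\<in>{P\<in>distinct_partitions n. cnd P k}. (-1::complex) ^ (card P - 1) * f k)"
      by (rule sum.inter_filter[symmetric]) (rule finite_D)
    also have "{P\<in>distinct_partitions n. cnd P k} = {P\<in>distinct_partitions n. P \<noteq> {} \<and> k \<le> Max P \<and> Max P - Min P < k}"
      using D_nonempty[OF _ assms] by (auto simp: cnd_def)
    also have "(\<Sum>P\<in>\<dots>. (-1::complex) ^ (card P - 1) * f k) = f k * of_int (top k n)"
      unfolding top_def by (simp add: sum_distrib_left mult.commute)
    finally show ?thesis .
  qed
  have "(\<Sum>P\<in>distinct_partitions n. (-1) ^ (card P - 1) *
            (\<Sum>j=1..Min P. (of_nat (Max P - Min P + j) :: complex) powr z * c ^ (Max P - Min P + j)))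
      = (\<Sum>P\<in>distinct_partitions n. (-1) ^ (card P - 1) * (\<Sum>k\<in>{1..n}. if cnd P k then f k else 0))"
    using step1 unfolding f_def by (intro sum.cong) auto
  also have "\<dots> = (\<Sum>k\<in>{1..n}. \<Sum>P\<in>distinct_partitions n. (-1::complex) ^ (card P - 1) * (if cnd P k then f k else 0))"
    unfolding sum_distrib_left by (rule sum.swap)
  also have "\<dots> = (\<Sum>k\<in>{1..n}. f k * of_int (top k n))" using step2 by simp
  also have "\<dots> = (\<Sum>k\<in>{1..n}. if k dvd n then f k else 0)"
    using top_val assms by (intro sum.cong) auto
  also have "\<dots> = (\<Sum>k\<in>{k\<in>{1..n}. k dvd n}. f k)"
    by (rule sum.inter_filter[symmetric]) simp
  also have "{k\<in>{1..n}. k dvd n} = {d. d dvd n}"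
    using assms by (auto intro: dvd_imp_le)
  finally show ?thesis unfolding sigma_zc_def f_def .
qed

end
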